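(* Let $A=(a_{ij})\in\mathbb{R}_{\max}^{2\times 2}$ with $\lambda(A)\ne-\infty$ and $g(\mathrm{crit}(A))=2$. Then $T_1(A)=\mathrm{DM}(2,2)=2$ if and only if $a_{11}\ne a_{22}$.
   Context: Max-plus semiring $\mathbb{R}_{\max}=\mathbb{R}\cup\{-\infty\}$ with $a\oplus b=\max(a,b)$, $a\otimes b=a+b$; $(AB)_{ij}=\max_k(a_{ik}+b_{kj})$; $A^t$ is the $t$-th max-plus power, $A^0=I$. $\mathcal{D}(A)$ is the digraph with arc $(i,j)$ of weight $a_{ij}$ whenever $a_{ij}\ne-\infty$; cycles, their length and weight as usual. $\lambda(A)$ is the maximal cycle mean. $\mathrm{crit}(A)$ is the subgraph of all nodes and arcs of cycles attaining $\lambda(A)$; its nodes are critical. $g(\mathrm{crit}(A))$ is the maximum over strongly connected components of $\mathrm{crit}(A)$ of their minimal cycle length. The cyclicity of $\mathrm{crit}(A)$ is the lcm over components of the gcd of their cycle lengths. CSR terms: with $\lambda=\lambda(A)$, $\gamma$ the cyclicity of $\mathrm{crit}(A)$, $A_\lambda$ equal to $A$ with $\lambda$ subtracted from every finite entry, $M=I\oplus N\oplus\dots\oplus N^{n-1}$ where $N=A_\lambda^\gamma$: $c_{ij}=m_{ij}$ if $j$ critical, else $-\infty$; $r_{ij}=m_{ij}$ if $i$ critical, else $-\infty$; $s_{ij}=a_{ij}$ if $(i,j)$ is an arc of $\mathrm{crit}(A)$, else $-\infty$; $CS^tR[A]$ is the product $CS^tR$. $B_N$ has $(B_N)_{ij}=-\infty$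 if $i$ or $j$ is critical and $a_{ij}$ otherwise. $T_1(A)$ is the least $T\ge0$ with $A^t=CS^tR[A]\oplus B_N^t$ for all $t\ge T$. $\mathrm{DM}(g,n)=g(n-2)+n$. *)

theory Defs
  imports Complex_Main "HOL-Library.Extended_Real"
begin

text \<open>Max-plus matrices of size n x n are functions nat => nat => ereal, indices 0..n-1.
  Entries range over R_max = R \<union> {-\<infinity>} (entries +\<infinity> are excluded by hypothesis).\<close>

type_synonym mpmat = "nat \<Rightarrow> nat \<Rightarrow> ereal"

definition mp_id :: mpmat where
  "mp_id i j = (if i = j then 0 else -\<infinity>)"

definition mp_mult :: "nat \<Rightarrow> mpmat \<Rightarrow> mpmat \<Rightarrow> mpmat" where
  "mp_mult n A B i j = (SUP k\<in>{..<n}. A i k + B k j)"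

primrec mp_pow :: "nat \<Rightarrow> mpmat \<Rightarrow> nat \<Rightarrow> mpmat" where
  "mp_pow n A 0 = mp_id"
| "mp_pow n A (Suc t) = mp_mult n (mp_pow n A t) A"

text \<open>Cycles of the digraph D(A): closed walks given by their node list c = [i_0,...,i_{k-1}],
  k \<ge> 1, with arcs (i_m, i_{(m+1) mod k}).\<close>

definition cycles :: "nat \<Rightarrow> mpmat \<Rightarrow> nat list set" where
  "cycles n A = {c. c \<noteq> [] \<and> set c \<subseteq> {..<n} \<and>
      (\<forall>m<length c. A (c!m) (c!((m+1) mod length c)) \<noteq> -\<infinity>)}"

definition cweight :: "mpmat \<Rightarrow> nat list \<Rightarrow> real" where
  "cweight A c = (\<Sum>m<length c. real_of_ereal (A (c!m) (c!((m+1) mod length c))))"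

definition cmean :: "mpmat \<Rightarrow> nat list \<Rightarrow> real" where
  "cmean A c = cweight A c / real (length c)"

text \<open>Maximal cycle mean (equals -\<infinity> if there are no cycles).\<close>
definition mcm :: "nat \<Rightarrow> mpmat \<Rightarrow> ereal" where
  "mcm n A = (SUP c\<in>cycles n A. ereal (cmean A c))"

definition crit_cycle :: "nat \<Rightarrow> mpmat \<Rightarrow> nat list \<Rightarrow> bool" where
  "crit_cycle n A c \<longleftrightarrow> c \<in> cycles n A \<and> ereal (cmean A c) = mcm n A"

definition crit_arc :: "nat \<Rightarrow> mpmat \<Rightarrow> nat \<Rightarrow> nat \<Rightarrow> bool" where
  "crit_arc n A i j \<longleftrightarrow> (\<exists>c. crit_cycle n A c \<and>
      (\<exists>m<length c. c!m = i \<and> c!((m+1) mod length c) = j))"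

definition crit_node :: "nat \<Rightarrow> mpmat \<Rightarrow> nat \<Rightarrow> bool" where
  "crit_node n A i \<longleftrightarrow> (\<exists>c. crit_cycle n A c \<and> i \<in> set c)"

definition crit_graph_cycles :: "nat \<Rightarrow> mpmat \<Rightarrow> nat list set" where
  "crit_graph_cycles n A = {c. c \<noteq> [] \<and>
      (\<forall>m<length c. crit_arc n A (c!m) (c!((m+1) mod length c)))}"

definition crit_comps :: "nat \<Rightarrow> mpmat \<Rightarrow> nat set set" where
  "crit_comps n A = {C. \<exists>i. crit_node n A i \<and>
      C = {j. (i,j) \<in> {(x,y). crit_arc n A x y}\<^sup>* \<and> (j,i) \<in> {(x,y). crit_arc n A x y}\<^sup>*}}"

definition comp_cycles :: "nat \<Rightarrow> mpmat \<Rightarrow> nat set \<Rightarrow> nat list set" where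
  "comp_cycles n A C = {c \<in> crit_graph_cycles n A. set c \<subseteq> C}"

definition comp_girth :: "nat \<Rightarrow> mpmat \<Rightarrow> nat set \<Rightarrow> nat" where
  "comp_girth n A C = (LEAST k. \<exists>c\<in>comp_cycles n A C. length c = k)"

definition g_crit :: "nat \<Rightarrow> mpmat \<Rightarrow> nat" where
  "g_crit n A = Max (comp_girth n A ` crit_comps n A)"

definition crit_cyclicity :: "nat \<Rightarrow> mpmat \<Rightarrow> nat" where
  "crit_cyclicity n A = Lcm ((\<lambda>C. Gcd (length ` comp_cycles n A C)) ` crit_comps n A)"

definition A_lam :: "nat \<Rightarrow> mpmat \<Rightarrow> mpmat" where
  "A_lam n A i j = A i j - mcm n A"

definition N_mat :: "nat \<Rightarrow> mpmat \<Rightarrow> mpmat" where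
  "N_mat n A = mp_pow n (A_lam n A) (crit_cyclicity n A)"

definition M_mat :: "nat \<Rightarrow> mpmat \<Rightarrow> mpmat" where
  "M_mat n A i j = (SUP k\<in>{..<n}. mp_pow n (N_mat n A) k i j)"

definition C_mat :: "nat \<Rightarrow> mpmat \<Rightarrow> mpmat" where
  "C_mat n A i j = (if crit_node n A j then M_mat n A i j else -\<infinity>)"

definition R_mat :: "nat \<Rightarrow> mpmat \<Rightarrow> mpmat" where
  "R_mat n A i j = (if crit_node n A i then M_mat n A i j else -\<infinity>)"

definition S_mat :: "nat \<Rightarrow> mpmat \<Rightarrow> mpmat" where
  "S_mat n A i j = (if crit_arc n A i j then A i j else -\<infinity>)"

definition CSR :: "nat \<Rightarrow> mpmat \<Rightarrow> nat \<Rightarrow> mpmat" where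
  "CSR n A t = mp_mult n (mp_mult n (C_mat n A) (mp_pow n (S_mat n A) t)) (R_mat n A)"

definition B_N :: "nat \<Rightarrow> mpmat \<Rightarrow> mpmat" where
  "B_N n A i j = (if crit_node n A i \<or> crit_node n A j then -\<infinity> else A i j)"

definition T1 :: "nat \<Rightarrow> mpmat \<Rightarrow> nat" where
  "T1 n A = (LEAST T. \<forall>t\<ge>T. \<forall>i<n. \<forall>j<n.
      mp_pow n A t i j = max (CSR n A t i j) (mp_pow n (B_N n A) t i j))"

definition DM :: "nat \<Rightarrow> nat \<Rightarrow> nat" where
  "DM g n = g * (n - 2) + n"

end

theory Submission
  imports Defs
begin



lemma lessThan2: "{..<2::nat} = {0,1}" by auto

lemma mp_mult2: "mp_mult 2 X Y i j = max (X i 0 + Y 0 j) (X i 1 + Y 1 j)"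
  unfolding mp_mult_def lessThan2 by (simp add: sup_max)

lemma sum_rot:
  assumes "(n::nat) > 0"
  shows "(\<Sum>m<n. f ((m+1) mod n)) = (\<Sum>m<n. (f m :: real))"
proof -
  obtain k where n: "n = Suc k" using assms by (cases n) auto
  have "(\<Sum>m<Suc k. f ((m+1) mod Suc k)) = (\<Sum>m<k. f ((m+1) mod Suc k)) + f ((k+1) mod Suc k)"
    by simp
  also have "(\<Sum>m<k. f ((m+1) mod Suc k)) = (\<Sum>m<k. f (Suc m))"
    by (rule sum.cong) auto
  also have "f ((k+1) mod Suc k) = f 0" by simp
  also have "(\<Sum>m<k. f (Suc m)) + f 0 = (\<Sum>m<Suc k. f m)"
    by (simp only: sum.lessThan_Suc_shift)
  finally show ?thesis unfolding n .
qed

lemma cycle_arc: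
  assumes "c \<in> cycles n A" "m < length c"
  shows "c!m < n" "c!((m+1) mod length c) < n" "A (c!m) (c!((m+1) mod length c)) \<noteq> -\<infinity>"
  using assms unfolding cycles_def
  by (auto simp: subset_iff)

lemma pot_bound:
  fixes A :: mpmat and r :: real and pot :: "nat \<Rightarrow> real"
  assumes c: "c \<in> cycles n A"
  and fin: "\<forall>i<n. \<forall>j<n. A i j \<noteq> \<infinity>"
  and h: "\<forall>i<n. \<forall>j<n. A i j \<noteq> -\<infinity> \<longrightarrow> A i j \<le> ereal (r + pot j - pot i)"
  shows "cweight A c \<le> real (length c) * r"
    and "(\<exists>m<length c. A (c!m) (c!((m+1) mod length c)) < ereal (r + pot (c!((m+1) mod length c)) - pot (c!m)))
         \<Longrightarrow> cweight A c < real (length c) * r"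
proof -
  let ?l = "length c"
  have l0: "?l > 0" using c unfolding cycles_def by auto
  define w where "w m = real_of_ereal (A (c!m) (c!((m+1) mod ?l)))" for m
  define u where "u m = r + pot (c!((m+1) mod ?l)) - pot (c!m)" for m
  have wu: "w m \<le> u m" if "m < ?l" for m
  proof -
    have a: "c!m < n" "c!((m+1) mod ?l) < n" "A (c!m) (c!((m+1) mod ?l)) \<noteq> -\<infinity>"
      using cycle_arc[OF c that] by auto
    then have "A (c!m) (c!((m+1) mod ?l)) \<noteq> \<infinity>" using fin by auto
    moreover have "A (c!m) (c!((m+1) mod ?l)) \<le> ereal (u m)" using h a unfolding u_def by auto
    ultimately show ?thesis unfolding w_def using a(3) by (cases "A (c!m) (c!((m+1) mod ?l))") auto
  qed
  have wus: "w m < u m" if "m < ?l" "A (c!m) (c!((m+1) mod ?l)) < ereal (u m)" for m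
  proof -
    have a: "c!m < n" "c!((m+1) mod ?l) < n" "A (c!m) (c!((m+1) mod ?l)) \<noteq> -\<infinity>"
      using cycle_arc[OF c that(1)] by auto
    then have "A (c!m) (c!((m+1) mod ?l)) \<noteq> \<infinity>" using fin by auto
    then show ?thesis unfolding w_def using a(3) that(2) by (cases "A (c!m) (c!((m+1) mod ?l))") auto
  qed
  have su: "(\<Sum>m<?l. u m) = real ?l * r"
  proof -
    have "(\<Sum>m<?l. u m) = (\<Sum>m<?l. r) + ((\<Sum>m<?l. pot (c!((m+1) mod ?l))) - (\<Sum>m<?l. pot (c!m)))"
      unfolding u_def by (simp add: sum.distrib sum_subtractf)
    also have "(\<Sum>m<?l. pot (c!((m+1) mod ?l))) = (\<Sum>m<?l. pot (c!m))"
      using sum_rot[OF l0, of "\<lambda>m. pot (c!m)"] by simp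
    finally show ?thesis by simp
  qed
  have cw: "cweight A c = (\<Sum>m<?l. w m)" unfolding cweight_def w_def by simp
  show "cweight A c \<le> real ?l * r"
    unfolding cw su[symmetric] by (rule sum_mono) (use wu in auto)
  assume "\<exists>m<?l. A (c!m) (c!((m+1) mod ?l)) < ereal (r + pot (c!((m+1) mod ?l)) - pot (c!m))"
  then obtain m where m: "m < ?l" "A (c!m) (c!((m+1) mod ?l)) < ereal (u m)" unfolding u_def by auto
  show "cweight A c < real ?l * r"
    unfolding cw su[symmetric]
    by (rule sum_strict_mono_ex1) (use wu wus m in auto)
qed

lemma cmean_le:
  assumes "c \<in> cycles n A" "cweight A c \<le> real (length c) * r"
  shows "cmean A c \<le> r"
proof -
  have "length c > 0" using assms unfolding cycles_def by auto
  then show ?thesis using assms unfolding cmean_def by (simp add: divide_le_eq mult.commute)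
qed

lemma cmean_less:
  assumes "c \<in> cycles n A" "cweight A c < real (length c) * r"
  shows "cmean A c < r"
proof -
  have "length c > 0" using assms unfolding cycles_def by auto
  then show ?thesis using assms unfolding cmean_def by (simp add: divide_less_eq mult.commute)
qed

lemma crit_cycle_arc:
  assumes "crit_cycle n A c" "m < length c"
  shows "crit_arc n A (c!m) (c!((m+1) mod length c))"
  using assms unfolding crit_arc_def by blast

lemma crit_arc_lt:
  assumes "crit_arc n A i j" shows "i < n" "j < n"
  using assms cycle_arc(1,2) unfolding crit_arc_def crit_cycle_def by blast+

lemma crit_node_lt:
  assumes "crit_node n A i" shows "i < n"
  using assms unfolding crit_node_def crit_cycle_def cycles_def by auto

lemma crit_reach_step:
  assumes "crit_cycle n A c" "m < length c"
  shows "(c!m, c!((m+d) mod length c)) \<in> {(x,y). crit_arc n A x y}\<^sup>*"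
proof (induction d)
  case 0
  then show ?case using assms(2) by simp
next
  case (Suc d)
  have l: "length c > 0" using assms(2) by auto
  have "crit_arc n A (c!((m+d) mod length c)) (c!(((m+d) mod length c + 1) mod length c))"
    using crit_cycle_arc[OF assms(1)] l by simp
  moreover have "((m+d) mod length c + 1) mod length c = (m + Suc d) mod length c"
    by (simp add: mod_Suc_eq)
  ultimately show ?case using Suc by (auto intro: rtrancl_into_rtrancl)
qed

lemma crit_reach:
  assumes "crit_cycle n A c" "m < length c" "m' < length c"
  shows "(c!m, c!m') \<in> {(x,y). crit_arc n A x y}\<^sup>*"
proof -
  have "(m + (m' + length c - m)) mod length c = m'"
    using assms(2,3) by (simp add: le_mod_geq)
  then show ?thesis using crit_reach_step[OF assms(1,2), of "m' + length c - m"] by simp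
qed

lemma alt_step: "(x::nat) < 2 \<Longrightarrow> y < 2 \<Longrightarrow> x \<noteq> y \<Longrightarrow> x = (z + m) mod 2 \<Longrightarrow> y = (z + Suc m) mod 2"
  by (auto simp: mod_Suc)

lemma even_aux: "(c0 + (l - 1)) mod 2 \<noteq> (c0::nat) \<Longrightarrow> c0 < 2 \<Longrightarrow> l > 0 \<Longrightarrow> even l"
proof -
  assume a: "(c0 + (l - 1)) mod 2 \<noteq> c0" "c0 < 2" "l > 0"
  obtain k where l: "l = Suc k" using a(3) by (cases l) auto
  have "c0 = 0 \<or> c0 = 1" using a(2) by auto
  then show ?thesis using a(1) unfolding l by (auto simp: mod_Suc even_iff_mod_2_eq_zero split: if_splits; presburger)
qed

lemma even_alt:
  fixes c :: "nat list"
  assumes "c \<noteq> []" "\<forall>m<length c. c!m < 2 \<and> c!((m+1) mod length c) < 2 \<and> c!m \<noteq> c!((m+1) mod length c)"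
  shows "even (length c)"
proof -
  let ?l = "length c"
  have ind: "m < ?l \<Longrightarrow> c!m = (c!0 + m) mod 2" for m
  proof (induction m)
    case 0 then show ?case using assms by auto
  next
    case (Suc m)
    have ml: "m < ?l" using Suc(2) by simp
    have md: "(m+1) mod ?l = m + 1" using Suc(2) by simp
    have h: "c!m < 2 \<and> c!((m+1) mod ?l) < 2 \<and> c!m \<noteq> c!((m+1) mod ?l)"
      using assms(2) ml by blast
    have "c!m = (c!0 + m) mod 2" using Suc(1)[OF ml] .
    then have "c!(m+1) = (c!0 + Suc m) mod 2"
      using alt_step[of "c!m" "c!(m+1)" "c!0" m] h unfolding md by blast
    then show ?case by simp
  qed
  have l0: "?l > 0" using assms by auto
  have md: "(?l - 1 + 1) mod ?l = 0" using l0 by simp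
  have "?l - 1 < ?l" using l0 by simp
  then have h: "c!(?l-1) < 2 \<and> c!((?l-1+1) mod ?l) < 2 \<and> c!(?l-1) \<noteq> c!((?l-1+1) mod ?l)"
    using assms(2) by blast
  have "c!(?l-1) = (c!0 + (?l - 1)) mod 2" using ind[OF \<open>?l - 1 < ?l\<close>] .
  then have "(c!0 + (?l - 1)) mod 2 \<noteq> c!0" "c!0 < 2" using h unfolding md by auto
  then show ?thesis using l0 even_aux by blast
qed

definition adm :: "mpmat \<Rightarrow> real \<Rightarrow> bool" where
  "adm A r \<longleftrightarrow> A 0 0 \<le> ereal r \<and> A 1 1 \<le> ereal r \<and> A 0 1 + A 1 0 \<le> ereal (2*r)"

locale twomat =
  fixes A :: mpmat
  assumes fin: "\<forall>i<2. \<forall>j<2. A i j \<noteq> \<infinity>"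
begin

lemma fin': "A 0 0 \<noteq> \<infinity>" "A 0 1 \<noteq> \<infinity>" "A 1 0 \<noteq> \<infinity>" "A 1 1 \<noteq> \<infinity>"
  using fin by auto

definition pot :: "real \<Rightarrow> nat \<Rightarrow> real" where
  "pot r i = (if i = 0 then 0 else
     if A 0 1 \<noteq> -\<infinity> then real_of_ereal (A 0 1) - r else r - real_of_ereal (A 1 0))"

lemma pot_ok:
  assumes "adm A r"
  shows "\<forall>i<2. \<forall>j<2. A i j \<noteq> -\<infinity> \<longrightarrow> A i j \<le> ereal (r + pot r j - pot r i)"
proof (intro allI impI)
  fix i j :: nat assume ij: "i < 2" "j < 2" "A i j \<noteq> -\<infinity>"
  have "i = 0 \<or> i = 1" "j = 0 \<or> j = 1" using ij by auto
  then show "A i j \<le> ereal (r + pot r j - pot r i)"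
    using assms ij(3) fin' unfolding adm_def pot_def
    by (cases "A 0 1"; cases "A 1 0"; auto)
qed

lemma adm_bound:
  assumes "c \<in> cycles 2 A" "adm A r"
  shows "cmean A c \<le> r"
  using cmean_le[OF assms(1) pot_bound(1)[OF assms(1) fin pot_ok[OF assms(2)]]] .

lemma loop_cycle:
  assumes "k < 2" "A k k \<noteq> -\<infinity>"
  shows "[k] \<in> cycles 2 A" "ereal (cmean A [k]) = A k k"
proof -
  have "A k k \<noteq> \<infinity>" using assms fin by auto
  then show "[k] \<in> cycles 2 A" "ereal (cmean A [k]) = A k k"
    using assms unfolding cycles_def cmean_def cweight_def by (cases "A k k"; auto)+
qed

lemma two_cycle:
  assumes "A 0 1 \<noteq> -\<infinity>" "A 1 0 \<noteq> -\<infinity>"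
  shows "[0,1] \<in> cycles 2 A" "cmean A [0,1] = (real_of_ereal (A 0 1) + real_of_ereal (A 1 0)) / 2"
proof -
  show "[0,1] \<in> cycles 2 A" using assms unfolding cycles_def
    by (auto simp: less_Suc_eq)
  show "cmean A [0,1] = (real_of_ereal (A 0 1) + real_of_ereal (A 1 0)) / 2"
    unfolding cmean_def cweight_def by (simp add: lessThan2)
qed

lemma mcm_ub: "adm A r \<Longrightarrow> mcm 2 A \<le> ereal r"
  unfolding mcm_def by (rule SUP_least) (simp add: adm_bound)

lemma mcm_lb: "c \<in> cycles 2 A \<Longrightarrow> ereal (cmean A c) \<le> mcm 2 A"
  unfolding mcm_def by (rule SUP_upper)

lemma mcm_struct:
  assumes "mcm 2 A \<noteq> -\<infinity>"
  obtains L where "mcm 2 A = ereal L" "adm A L"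
    "A 0 0 = ereal L \<or> A 1 1 = ereal L \<or>
     (A 0 1 \<noteq> -\<infinity> \<and> A 1 0 \<noteq> -\<infinity> \<and> real_of_ereal (A 0 1) + real_of_ereal (A 1 0) = 2*L)"
proof -
  define c2 where "c2 = (if A 0 1 \<noteq> -\<infinity> \<and> A 1 0 \<noteq> -\<infinity>
     then ereal ((real_of_ereal (A 0 1) + real_of_ereal (A 1 0)) / 2) else -\<infinity>)"
  define m where "m = max (max (A 0 0) (A 1 1)) c2"
  have l0: "A 0 0 \<le> mcm 2 A"
    using mcm_lb[OF loop_cycle(1)[of 0]] loop_cycle(2)[of 0] by (cases "A 0 0 = -\<infinity>") auto
  have l1: "A 1 1 \<le> mcm 2 A"
    using mcm_lb[OF loop_cycle(1)[of 1]] loop_cycle(2)[of 1] by (cases "A 1 1 = -\<infinity>") auto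
  have l2: "c2 \<le> mcm 2 A"
  proof (cases "A 0 1 \<noteq> -\<infinity> \<and> A 1 0 \<noteq> -\<infinity>")
    case True
    have "ereal (cmean A [0,1]) \<le> mcm 2 A" using mcm_lb[OF two_cycle(1)] True by auto
    moreover have eq: "cmean A [0,1] = (real_of_ereal (A 0 1) + real_of_ereal (A 1 0)) / 2"
      using two_cycle(2) True by blast
    have "c2 = ereal (cmean A [0,1])" using True unfolding c2_def eq by simp
    ultimately show ?thesis by simp
  qed (auto simp: c2_def)
  have mle: "m \<le> mcm 2 A" unfolding m_def using l0 l1 l2 by auto
  have mninf: "m \<noteq> -\<infinity>"
  proof
    assume "m = -\<infinity>"
    then have h: "A 0 0 = -\<infinity>" "A 1 1 = -\<infinity>" "c2 = -\<infinity>" unfolding m_def by (auto simp: max_def split: if_splits)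
    have "A 0 1 + A 1 0 = -\<infinity>" using h(3) fin' unfolding c2_def
      by (cases "A 0 1"; cases "A 1 0"; auto split: if_splits)
    then have "adm A r" for r using h fin' unfolding adm_def by (cases "A 0 1"; cases "A 1 0"; auto)
    then have "mcm 2 A \<le> ereal r" for r using mcm_ub by auto
    then have "mcm 2 A = -\<infinity>" by (rule ereal_bot)
    then show False using assms by simp
  qed
  have mfin: "m \<noteq> \<infinity>" unfolding m_def c2_def using fin' by (auto simp: max_def)
  obtain L where mL: "m = ereal L" using mninf mfin by (cases m) auto
  have adm: "adm A L"
  proof -
    have "A 0 0 \<le> m" "A 1 1 \<le> m" "c2 \<le> m" unfolding m_def by (auto simp: le_max_iff_disj)
    then have "A 0 0 \<le> ereal L" "A 1 1 \<le> ereal L" "c2 \<le> ereal L" using mL by auto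
    moreover have "A 0 1 + A 1 0 \<le> ereal (2*L)"
    proof (cases "A 0 1 \<noteq> -\<infinity> \<and> A 1 0 \<noteq> -\<infinity>")
      case True
      then have "(real_of_ereal (A 0 1) + real_of_ereal (A 1 0)) / 2 \<le> L"
        using \<open>c2 \<le> ereal L\<close> unfolding c2_def by auto
      then show ?thesis using True fin' by (cases "A 0 1"; cases "A 1 0"; auto)
    next
      case False
      then show ?thesis using fin' by (cases "A 0 1"; cases "A 1 0"; auto)
    qed
    ultimately show ?thesis unfolding adm_def by auto
  qed
  have "mcm 2 A = ereal L" using mcm_ub[OF adm] mle mL by auto
  moreover have "A 0 0 = ereal L \<or> A 1 1 = ereal L \<or>
     (A 0 1 \<noteq> -\<infinity> \<and> A 1 0 \<noteq> -\<infinity> \<and> real_of_ereal (A 0 1) + real_of_ereal (A 1 0) = 2*L)"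
    using mL unfolding m_def c2_def by (auto simp: max_def split: if_splits)
  ultimately show ?thesis using that adm by blast
qed



end


context twomat begin

lemma bad_case:
  assumes mcmL: "mcm 2 A = ereal L" and k: "k < 2" "A k k = ereal L"
  shows "g_crit 2 A \<le> 1"
proof -
  let ?R = "{(x,y). crit_arc 2 A x y}"
  define SCC where "SCC i = {j. (i,j) \<in> ?R\<^sup>* \<and> (j,i) \<in> ?R\<^sup>*}" for i
  have ck: "crit_cycle 2 A [k]"
    using loop_cycle[of k] k mcmL unfolding crit_cycle_def by auto
  have ak: "crit_arc 2 A k k" using crit_cycle_arc[OF ck, of 0] by simp
  have comps: "crit_comps 2 A = SCC ` {i. crit_node 2 A i}"
    unfolding crit_comps_def SCC_def by auto
  have "finite {i. crit_node 2 A i}"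
    by (rule finite_subset[of _ "{..<2}"]) (auto dest: crit_node_lt)
  then have fin: "finite (crit_comps 2 A)" unfolding comps by (rule finite_imageI)
  have "crit_node 2 A k" using ck unfolding crit_node_def by force
  then have ne: "crit_comps 2 A \<noteq> {}" unfolding comps by auto
  have gir: "comp_girth 2 A C \<le> 1" if C: "C \<in> crit_comps 2 A" for C
  proof -
    obtain i where i: "crit_node 2 A i" "C = SCC i" using C unfolding comps by auto
    obtain c where c: "crit_cycle 2 A c" "i \<in> set c" using i(1) unfolding crit_node_def by auto
    have cyc: "c \<in> cycles 2 A" using c unfolding crit_cycle_def by auto
    have "\<exists>k'. crit_arc 2 A k' k' \<and> k' \<in> C"
    proof (cases "\<forall>x\<in>set c. x = i")
      case True
      have l: "length c > 0" using c by auto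
      have "crit_arc 2 A (c!0) (c!(1 mod length c))" using crit_cycle_arc[OF c(1) l] by simp
      moreover have "c!(1 mod length c) \<in> set c" "c!0 \<in> set c" using l by (metis nth_mem mod_less_divisor)+
      then have "c!0 = i" "c!(1 mod length c) = i" using True by blast+
      ultimately show ?thesis using i(2) unfolding SCC_def by auto
    next
      case False
      then obtain j where j: "j \<in> set c" "j \<noteq> i" by auto
      have "i < 2" "j < 2" using cyc c(2) j(1) unfolding cycles_def by auto
      then have "k = i \<or> k = j" using k j(2) by auto
      moreover obtain mi where "mi < length c" "c!mi = i" using c(2) by (auto simp: in_set_conv_nth)
      moreover obtain mj where "mj < length c" "c!mj = j" using j(1) by (auto simp: in_set_conv_nth)
      ultimately have "k \<in> SCC i"
      proof (elim disjE)
        assume "k = i" then show ?thesis unfolding SCC_def by simp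
      next
        assume "k = j"
        then show ?thesis unfolding SCC_def using crit_reach[OF c(1) \<open>mi < length c\<close> \<open>mj < length c\<close>]
          crit_reach[OF c(1) \<open>mj < length c\<close> \<open>mi < length c\<close>] \<open>c!mi = i\<close> \<open>c!mj = j\<close> by simp
      qed
      then show ?thesis using ak i(2) by auto
    qed
    then obtain k' where k': "crit_arc 2 A k' k'" "k' \<in> C" by auto
    have "[k'] \<in> comp_cycles 2 A C"
      using k' unfolding comp_cycles_def crit_graph_cycles_def by auto
    then have "\<exists>c\<in>comp_cycles 2 A C. length c = 1" by force
    then show ?thesis unfolding comp_girth_def by (rule Least_le)
  qed
  show ?thesis unfolding g_crit_def
    by (subst Max_le_iff) (use fin ne gir in auto)
qed

end


locale goodmat = twomat +
  fixes L :: real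
  assumes mcmL: "mcm 2 A = ereal L" and admL: "adm A L"
    and a00: "A 0 0 < ereal L" and a11: "A 1 1 < ereal L"
    and pfin: "A 0 1 \<noteq> -\<infinity>" and qfin: "A 1 0 \<noteq> -\<infinity>"
    and pq: "real_of_ereal (A 0 1) + real_of_ereal (A 1 0) = 2*L"
begin

lemma crit_cycle_iff: "crit_cycle 2 A c \<longleftrightarrow> c \<in> cycles 2 A \<and> cmean A c = L"
  unfolding crit_cycle_def mcmL by auto

lemma good_no_loop:
  assumes c: "crit_cycle 2 A c" and m: "m < length c"
  shows "c!m \<noteq> c!((m+1) mod length c)"
proof
  assume eq: "c!m = c!((m+1) mod length c)"
  have cyc: "c \<in> cycles 2 A" and cm: "cmean A c = L" using c crit_cycle_iff by auto
  have x: "c!m < 2" using cycle_arc(1)[OF cyc m] .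
  have "A (c!m) (c!m) < ereal L" using x a00 a11 by (cases "c!m") (auto simp: less_2_cases_iff)
  then have "\<exists>m<length c. A (c!m) (c!((m+1) mod length c)) < ereal (L + pot L (c!((m+1) mod length c)) - pot L (c!m))"
    using m eq by (intro exI[of _ m]) (simp add: eq[symmetric])
  then have "cweight A c < real (length c) * L"
    using pot_bound(2)[OF cyc fin pot_ok[OF admL]] by blast
  then have "cmean A c < L" by (rule cmean_less[OF cyc])
  then show False using cm by simp
qed

lemma crit01: "crit_cycle 2 A [0,1]"
  using two_cycle[OF pfin qfin] pq unfolding crit_cycle_iff by auto

lemma crit_arc_iff: "crit_arc 2 A i j \<longleftrightarrow> i < 2 \<and> j < 2 \<and> i \<noteq> j"
proof
  assume a: "crit_arc 2 A i j"
  then obtain c m where cm: "crit_cycle 2 A c" "m < length c" "c!m = i" "c!((m+1) mod length c) = j"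
    unfolding crit_arc_def by blast
  have "i \<noteq> j" using good_no_loop[OF cm(1,2)] cm(3,4) by simp
  then show "i < 2 \<and> j < 2 \<and> i \<noteq> j" using crit_arc_lt[OF a] by simp
next
  assume "i < 2 \<and> j < 2 \<and> i \<noteq> j"
  then have "(i = 0 \<and> j = 1) \<or> (i = 1 \<and> j = 0)" by auto
  moreover have "crit_arc 2 A 0 1" using crit_cycle_arc[OF crit01, of 0] by simp
  moreover have "crit_arc 2 A 1 0" using crit_cycle_arc[OF crit01, of 1] by simp
  ultimately show "crit_arc 2 A i j" by auto
qed

lemma crit_node_iff: "crit_node 2 A i \<longleftrightarrow> i < 2"
proof
  assume "i < 2"
  then have "i \<in> set [0,1]" by auto
  then show "crit_node 2 A i" using crit01 unfolding crit_node_def by blast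
qed (rule crit_node_lt)

lemma R_eq: "{(x,y). crit_arc 2 A x y} = {(x,y). x < 2 \<and> y < 2 \<and> x \<noteq> y}"
  using crit_arc_iff by auto

lemma SCC_eq:
  assumes "i < (2::nat)"
  shows "{j. (i,j) \<in> {(x,y). crit_arc 2 A x y}\<^sup>* \<and> (j,i) \<in> {(x,y). crit_arc 2 A x y}\<^sup>*} = {0,1}"
proof -
  let ?R = "{(x::nat,y). x < 2 \<and> y < 2 \<and> x \<noteq> y}"
  have lt: "j < 2" if "(i,j) \<in> ?R\<^sup>*" for j
  proof -
    from that show ?thesis
    proof (rule rtranclE)
      assume "i = j" then show ?thesis using assms by simp
    next
      fix y assume "(y, j) \<in> ?R" then show ?thesis by simp
    qed
  qed
  have re: "(i,j) \<in> ?R\<^sup>* \<and> (j,i) \<in> ?R\<^sup>*" if "j < 2" for j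
  proof (cases "i = j")
    case False
    then have "(i,j) \<in> ?R" "(j,i) \<in> ?R" using that assms by auto
    then show ?thesis by (intro conjI r_into_rtrancl)
  qed simp
  have "{j. (i,j) \<in> ?R\<^sup>* \<and> (j,i) \<in> ?R\<^sup>*} = {0,1}"
  proof (rule set_eqI)
    fix j
    show "j \<in> {j. (i,j) \<in> ?R\<^sup>* \<and> (j,i) \<in> ?R\<^sup>*} \<longleftrightarrow> j \<in> {0,1}"
    proof
      assume "j \<in> {j. (i,j) \<in> ?R\<^sup>* \<and> (j,i) \<in> ?R\<^sup>*}"
      then have "j < 2" using lt by blast
      then show "j \<in> {0,1}" by auto
    next
      assume "j \<in> {0,1}"
      then have "j < 2" by auto
      then show "j \<in> {j. (i,j) \<in> ?R\<^sup>* \<and> (j,i) \<in> ?R\<^sup>*}" using re by blast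
    qed
  qed
  then show ?thesis unfolding R_eq .
qed

lemma comps_eq: "crit_comps 2 A = {{0,1}}"
proof -
  have "crit_comps 2 A = {C. \<exists>i::nat. i < 2 \<and> C = {0,1}}"
    unfolding crit_comps_def crit_node_iff by (simp only: SCC_eq cong: conj_cong)
  also have "\<dots> = {{0,1}}"
  proof -
    have "\<exists>i::nat. i < 2" by (rule exI[of _ 0]) simp
    then show ?thesis by blast
  qed
  finally show ?thesis .
qed

lemma comp_cycles_eq: "comp_cycles 2 A {0,1} = crit_graph_cycles 2 A"
proof -
  have "set c \<subseteq> {0,1}" if "c \<in> crit_graph_cycles 2 A" for c
  proof
    fix x assume "x \<in> set c"
    then obtain m where "m < length c" "c!m = x" by (auto simp: in_set_conv_nth)
    then have "crit_arc 2 A x (c!((m+1) mod length c))" using that unfolding crit_graph_cycles_def by auto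
    then show "x \<in> {0,1}" using crit_arc_iff by auto
  qed
  then show ?thesis unfolding comp_cycles_def by auto
qed

lemma gcd_eq: "Gcd (length ` crit_graph_cycles 2 A) = 2"
proof -
  have in2: "[0,1] \<in> crit_graph_cycles 2 A"
    unfolding crit_graph_cycles_def using crit_cycle_arc[OF crit01] by auto
  have ev: "2 dvd length c" if "c \<in> crit_graph_cycles 2 A" for c
  proof -
    have h: "c \<noteq> [] \<and> (\<forall>m<length c. c!m < 2 \<and> c!((m+1) mod length c) < 2 \<and> c!m \<noteq> c!((m+1) mod length c))"
      using that unfolding crit_graph_cycles_def crit_arc_iff mem_Collect_eq .
    show ?thesis using even_alt h by blast
  qed
  have "length [0::nat,1] \<in> length ` crit_graph_cycles 2 A" using in2 by (rule imageI)
  then have "Gcd (length ` crit_graph_cycles 2 A) dvd length [0::nat,1]" by (rule Gcd_dvd)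
  then have "Gcd (length ` crit_graph_cycles 2 A) dvd 2" by (simp add: numeral_2_eq_2)
  moreover have "2 dvd Gcd (length ` crit_graph_cycles 2 A)"
  proof (rule Gcd_greatest)
    fix b assume "b \<in> length ` crit_graph_cycles 2 A"
    then obtain c where "c \<in> crit_graph_cycles 2 A" "b = length c" by blast
    then show "2 dvd b" using ev by blast
  qed
  ultimately show ?thesis by (rule dvd_antisym)
qed

lemma cyclicity_eq: "crit_cyclicity 2 A = 2"
  unfolding crit_cyclicity_def comps_eq image_insert image_empty comp_cycles_eq gcd_eq by simp

end


lemma pow1: "mp_pow n X 1 = mp_mult n mp_id X" by simp
lemma powS': "mp_pow n X (t+1) = mp_mult n (mp_pow n X t) X" by simp
lemma minf_plus[simp]: "x \<noteq> \<infinity> \<Longrightarrow> -\<infinity> + x = (-\<infinity>::ereal)" by (cases x) auto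
lemma plus_minf[simp]: "x \<noteq> \<infinity> \<Longrightarrow> x + -\<infinity> = (-\<infinity>::ereal)" by (cases x) auto

context goodmat begin

definition p where "p = real_of_ereal (A 0 1)"
definition q where "q = real_of_ereal (A 1 0)"
definition D where "D = max (A 0 0) (A 1 1)"

lemma A01: "A 0 1 = ereal p" using pfin fin' unfolding p_def by (cases "A 0 1") auto
lemma A10: "A 1 0 = ereal q" using qfin fin' unfolding q_def by (cases "A 1 0") auto
lemma A01': "A 0 (Suc 0) = ereal p" using A01 by simp
lemma A10': "A (Suc 0) 0 = ereal q" using A10 by simp
lemmas Avals = A01 A10 A01' A10'

lemma pqL: "p + q = 2*L" using pq unfolding p_def q_def .

lemma e0cases: "A 0 0 = -\<infinity> \<or> (\<exists>r. A 0 0 = ereal r \<and> r < L)"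
  using a00 fin' by (cases "A 0 0") auto
lemma e1cases: "A 1 1 = -\<infinity> \<or> (\<exists>r. A 1 1 = ereal r \<and> r < L)"
  using a11 fin' by (cases "A 1 1") auto

lemma A1: "i < 2 \<Longrightarrow> j < 2 \<Longrightarrow> mp_pow 2 A 1 i j = A i j"
  using fin' by (auto simp: mp_mult2 mp_id_def less_2_cases_iff)

lemma A2:
  "mp_pow 2 A 2 0 0 = ereal (2*L)" "mp_pow 2 A 2 1 1 = ereal (2*L)"
  "mp_pow 2 A 2 0 1 = ereal p + D" "mp_pow 2 A 2 1 0 = ereal q + D"
proof -
  have e: "mp_pow 2 A 2 = mp_mult 2 (mp_pow 2 A 1) A" using powS'[of 2 A 1] by (simp only: one_add_one)
  show "mp_pow 2 A 2 0 0 = ereal (2*L)" "mp_pow 2 A 2 1 1 = ereal (2*L)"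
    "mp_pow 2 A 2 0 1 = ereal p + D" "mp_pow 2 A 2 1 0 = ereal q + D"
    unfolding e mp_mult2 using A1[of 0 0] A1[of 0 1] A1[of 1 0] A1[of 1 1] e0cases e1cases pqL
    by (auto simp: Avals D_def max_def)
qed


lemma D_le: "A 0 0 \<le> D" "A 1 1 \<le> D" unfolding D_def by auto
lemma Dcases: "D = -\<infinity> \<or> (\<exists>d. D = ereal d \<and> d < L)"
  using e0cases e1cases unfolding D_def by (auto simp: max_def)


end


context goodmat begin


lemma o00: "X00 = ereal ((2*real k+2)*L) \<Longrightarrow> X01 = ereal (p + 2*real k*L) + D \<Longrightarrow>
  max (X00 + A 0 0) (X01 + A 1 0) = D + ereal ((2*real k+2)*L)" using e0cases e1cases pqL unfolding D_def by (elim disjE exE; simp add: Avals max_def algebra_simps; linarith?)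
lemma o01: "X00 = ereal ((2*real k+2)*L) \<Longrightarrow> X01 = ereal (p + 2*real k*L) + D \<Longrightarrow>
  max (X00 + A 0 1) (X01 + A 1 1) = ereal (p + (2*real k+2)*L)" using e0cases e1cases pqL unfolding D_def by (elim disjE exE; simp add: Avals max_def algebra_simps; linarith?)
lemma o10: "X10 = ereal (q + 2*real k*L) + D \<Longrightarrow> X11 = ereal ((2*real k+2)*L) \<Longrightarrow>
  max (X10 + A 0 0) (X11 + A 1 0) = ereal (q + (2*real k+2)*L)" using e0cases e1cases pqL unfolding D_def by (elim disjE exE; simp add: Avals max_def algebra_simps; linarith?)
lemma o11: "X10 = ereal (q + 2*real k*L) + D \<Longrightarrow> X11 = ereal ((2*real k+2)*L) \<Longrightarrow>
  max (X10 + A 0 1) (X11 + A 1 1) = D + ereal ((2*real k+2)*L)" using e0cases e1cases pqL unfolding D_def by (elim disjE exE; simp add: Avals max_def algebra_simps; linarith?)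
lemma e00: "Y00 = D + ereal ((2*real k+2)*L) \<Longrightarrow> Y01 = ereal (p + (2*real k+2)*L) \<Longrightarrow>
  max (Y00 + A 0 0) (Y01 + A 1 0) = ereal ((2*real (Suc k)+2)*L)" using e0cases e1cases pqL unfolding D_def by (elim disjE exE; simp add: Avals max_def algebra_simps; linarith?)
lemma e01: "Y00 = D + ereal ((2*real k+2)*L) \<Longrightarrow> Y01 = ereal (p + (2*real k+2)*L) \<Longrightarrow>
  max (Y00 + A 0 1) (Y01 + A 1 1) = ereal (p + 2*real (Suc k)*L) + D" using e0cases e1cases pqL unfolding D_def by (elim disjE exE; simp add: Avals max_def algebra_simps; linarith?)
lemma e10: "Y10 = ereal (q + (2*real k+2)*L) \<Longrightarrow> Y11 = D + ereal ((2*real k+2)*L) \<Longrightarrow>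
  max (Y10 + A 0 0) (Y11 + A 1 0) = ereal (q + 2*real (Suc k)*L) + D" using e0cases e1cases pqL unfolding D_def by (elim disjE exE; simp add: Avals max_def algebra_simps; linarith?)
lemma e11: "Y10 = ereal (q + (2*real k+2)*L) \<Longrightarrow> Y11 = D + ereal ((2*real k+2)*L) \<Longrightarrow>
  max (Y10 + A 0 1) (Y11 + A 1 1) = ereal ((2*real (Suc k)+2)*L)" using e0cases e1cases pqL unfolding D_def by (elim disjE exE; simp add: Avals max_def algebra_simps; linarith?)

end

context goodmat begin


lemma A2': "mp_pow 2 A (2*0+2) 0 0 = ereal ((2*real (0::nat)+2)*L) \<and>
   mp_pow 2 A (2*0+2) 1 1 = ereal ((2*real (0::nat)+2)*L) \<and>
   mp_pow 2 A (2*0+2) 0 1 = ereal (p + 2*real (0::nat)*L) + D \<and>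
   mp_pow 2 A (2*0+2) 1 0 = ereal (q + 2*real (0::nat)*L) + D"
proof -
  have z: "(2::nat)*0+2 = 2" "(2*real (0::nat)+2)*L = 2*L" "p + 2*real (0::nat)*L = p" "q + 2*real (0::nat)*L = q"
    by simp_all
  show ?thesis unfolding z by (intro conjI A2)
qed

lemma Aeven_odd:
  assumes "mp_pow 2 A (2*k+2) 0 0 = ereal ((2*real k+2)*L) \<and>
   mp_pow 2 A (2*k+2) 1 1 = ereal ((2*real k+2)*L) \<and>
   mp_pow 2 A (2*k+2) 0 1 = ereal (p + 2*real k*L) + D \<and>
   mp_pow 2 A (2*k+2) 1 0 = ereal (q + 2*real k*L) + D"
  shows "mp_pow 2 A (2*k+3) 0 0 = D + ereal ((2*real k+2)*L) \<and>
   mp_pow 2 A (2*k+3) 1 1 = D + ereal ((2*real k+2)*L) \<and>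
   mp_pow 2 A (2*k+3) 0 1 = ereal (p + (2*real k+2)*L) \<and>
   mp_pow 2 A (2*k+3) 1 0 = ereal (q + (2*real k+2)*L)"
proof -
  have n: "2*k+3 = (2*k+2)+1" by simp
  have e: "mp_pow 2 A (2*k+3) = mp_mult 2 (mp_pow 2 A (2*k+2)) A"
    unfolding n by (rule powS')
  note h = assms
  note h00 = h[THEN conjunct1] and h11 = h[THEN conjunct2, THEN conjunct1]
    and h01 = h[THEN conjunct2, THEN conjunct2, THEN conjunct1]
    and h10 = h[THEN conjunct2, THEN conjunct2, THEN conjunct2]
  show ?thesis unfolding e mp_mult2
    by (rule conjI[OF o00[OF h00 h01] conjI[OF o11[OF h10 h11] conjI[OF o01[OF h00 h01] o10[OF h10 h11]]]])
qed

lemma Aodd_even: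
  assumes "mp_pow 2 A (2*k+3) 0 0 = D + ereal ((2*real k+2)*L) \<and>
   mp_pow 2 A (2*k+3) 1 1 = D + ereal ((2*real k+2)*L) \<and>
   mp_pow 2 A (2*k+3) 0 1 = ereal (p + (2*real k+2)*L) \<and>
   mp_pow 2 A (2*k+3) 1 0 = ereal (q + (2*real k+2)*L)"
  shows "mp_pow 2 A (2*Suc k+2) 0 0 = ereal ((2*real (Suc k)+2)*L) \<and>
   mp_pow 2 A (2*Suc k+2) 1 1 = ereal ((2*real (Suc k)+2)*L) \<and>
   mp_pow 2 A (2*Suc k+2) 0 1 = ereal (p + 2*real (Suc k)*L) + D \<and>
   mp_pow 2 A (2*Suc k+2) 1 0 = ereal (q + 2*real (Suc k)*L) + D"
proof -
  have n: "2*Suc k+2 = (2*k+3)+1" by simp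
  have e: "mp_pow 2 A (2*Suc k+2) = mp_mult 2 (mp_pow 2 A (2*k+3)) A"
    unfolding n by (rule powS')
  note h = assms
  note h00 = h[THEN conjunct1] and h11 = h[THEN conjunct2, THEN conjunct1]
    and h01 = h[THEN conjunct2, THEN conjunct2, THEN conjunct1]
    and h10 = h[THEN conjunct2, THEN conjunct2, THEN conjunct2]
  show ?thesis unfolding e mp_mult2
    by (rule conjI[OF e00[OF h00 h01] conjI[OF e11[OF h10 h11] conjI[OF e01[OF h00 h01] e10[OF h10 h11]]]])
qed

lemma Apow_even:
  "mp_pow 2 A (2*k+2) 0 0 = ereal ((2*real k+2)*L) \<and>
   mp_pow 2 A (2*k+2) 1 1 = ereal ((2*real k+2)*L) \<and>
   mp_pow 2 A (2*k+2) 0 1 = ereal (p + 2*real k*L) + D \<and>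
   mp_pow 2 A (2*k+2) 1 0 = ereal (q + 2*real k*L) + D"
proof (induction k)
  case 0 show ?case by (rule A2')
next
  case (Suc k) then show ?case by (intro Aodd_even Aeven_odd)
qed

lemmas Apow_odd = Aeven_odd[OF Apow_even]

end

context goodmat begin

lemma Sv: "S_mat 2 A 0 0 = -\<infinity>" "S_mat 2 A 1 1 = -\<infinity>" "S_mat 2 A 0 1 = ereal p" "S_mat 2 A 1 0 = ereal q"
  unfolding S_mat_def crit_arc_iff by (simp_all add: Avals)

lemma Spow_even_odd:
  assumes "mp_pow 2 (S_mat 2 A) (2*k) 0 0 = ereal (2*real k*L) \<and> mp_pow 2 (S_mat 2 A) (2*k) 1 1 = ereal (2*real k*L) \<and>
    mp_pow 2 (S_mat 2 A) (2*k) 0 1 = -\<infinity> \<and> mp_pow 2 (S_mat 2 A) (2*k) 1 0 = -\<infinity>"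
  shows "mp_pow 2 (S_mat 2 A) (2*k+1) 0 0 = -\<infinity> \<and> mp_pow 2 (S_mat 2 A) (2*k+1) 1 1 = -\<infinity> \<and>
    mp_pow 2 (S_mat 2 A) (2*k+1) 0 1 = ereal (p + 2*real k*L) \<and> mp_pow 2 (S_mat 2 A) (2*k+1) 1 0 = ereal (q + 2*real k*L)"
proof -
  have e: "mp_pow 2 (S_mat 2 A) (2*k+1) = mp_mult 2 (mp_pow 2 (S_mat 2 A) (2*k)) (S_mat 2 A)" by (rule powS')
  note h = assms
  note h00 = h[THEN conjunct1] and h11 = h[THEN conjunct2, THEN conjunct1]
    and h01 = h[THEN conjunct2, THEN conjunct2, THEN conjunct1]
    and h10 = h[THEN conjunct2, THEN conjunct2, THEN conjunct2]
  show ?thesis unfolding e mp_mult2 h00 h11 h01 h10 Sv by (simp add: algebra_simps)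
qed

lemma Spow_odd_even:
  assumes "mp_pow 2 (S_mat 2 A) (2*k+1) 0 0 = -\<infinity> \<and> mp_pow 2 (S_mat 2 A) (2*k+1) 1 1 = -\<infinity> \<and>
    mp_pow 2 (S_mat 2 A) (2*k+1) 0 1 = ereal (p + 2*real k*L) \<and> mp_pow 2 (S_mat 2 A) (2*k+1) 1 0 = ereal (q + 2*real k*L)"
  shows "mp_pow 2 (S_mat 2 A) (2*Suc k) 0 0 = ereal (2*real (Suc k)*L) \<and> mp_pow 2 (S_mat 2 A) (2*Suc k) 1 1 = ereal (2*real (Suc k)*L) \<and>
    mp_pow 2 (S_mat 2 A) (2*Suc k) 0 1 = -\<infinity> \<and> mp_pow 2 (S_mat 2 A) (2*Suc k) 1 0 = -\<infinity>"
proof -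
  have n: "2*Suc k = (2*k+1)+1" by simp
  have e: "mp_pow 2 (S_mat 2 A) (2*Suc k) = mp_mult 2 (mp_pow 2 (S_mat 2 A) (2*k+1)) (S_mat 2 A)"
    unfolding n by (rule powS')
  note h = assms
  note h00 = h[THEN conjunct1] and h11 = h[THEN conjunct2, THEN conjunct1]
    and h01 = h[THEN conjunct2, THEN conjunct2, THEN conjunct1]
    and h10 = h[THEN conjunct2, THEN conjunct2, THEN conjunct2]
  have a: "ereal (p + 2*real k*L) + ereal q = ereal (2*real (Suc k)*L)"
          "ereal (q + 2*real k*L) + ereal p = ereal (2*real (Suc k)*L)"
    using pqL by (simp_all add: algebra_simps)
  show ?thesis unfolding e mp_mult2 h00 h11 h01 h10 Sv a by simp
qed

lemma Spow_even:
  "mp_pow 2 (S_mat 2 A) (2*k) 0 0 = ereal (2*real k*L) \<and> mp_pow 2 (S_mat 2 A) (2*k) 1 1 = ereal (2*real k*L) \<and>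
    mp_pow 2 (S_mat 2 A) (2*k) 0 1 = -\<infinity> \<and> mp_pow 2 (S_mat 2 A) (2*k) 1 0 = -\<infinity>"
proof (induction k)
  case 0 show ?case by (simp add: mp_id_def zero_ereal_def)
next
  case (Suc k) then show ?case by (intro Spow_odd_even Spow_even_odd)
qed

lemmas Spow_odd = Spow_even_odd[OF Spow_even]

end

context goodmat begin

lemma Alv: "A_lam 2 A 0 0 = A 0 0 - ereal L" "A_lam 2 A 1 1 = A 1 1 - ereal L"
  "A_lam 2 A 0 1 = ereal (p - L)" "A_lam 2 A 1 0 = ereal (q - L)"
  unfolding A_lam_def mcmL by (simp_all add: Avals)

lemma minusL: "x \<noteq> \<infinity> \<Longrightarrow> x - ereal L \<noteq> \<infinity>" by (cases x) auto

lemma Alfin: "i < 2 \<Longrightarrow> j < 2 \<Longrightarrow> A_lam 2 A i j \<noteq> \<infinity>"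
  using fin minusL[of "A i j"] unfolding A_lam_def mcmL by blast

lemma Al1: "i < 2 \<Longrightarrow> j < 2 \<Longrightarrow> mp_mult 2 mp_id (A_lam 2 A) i j = A_lam 2 A i j"
  using Alfin[of 0 j] Alfin[of 1 j] by (auto simp: mp_mult2 mp_id_def less_2_cases_iff)

lemma Nform: "N_mat 2 A = mp_mult 2 (mp_mult 2 mp_id (A_lam 2 A)) (A_lam 2 A)"
  unfolding N_mat_def cyclicity_eq by (simp add: numeral_2_eq_2)

lemma Nv: "N_mat 2 A 0 0 = 0" "N_mat 2 A 1 1 = 0"
  "N_mat 2 A 0 1 = ereal (p - 2*L) + D" "N_mat 2 A 1 0 = ereal (q - 2*L) + D"
proof -
  have Al1v: "mp_mult 2 mp_id (A_lam 2 A) 0 0 = A_lam 2 A 0 0" "mp_mult 2 mp_id (A_lam 2 A) 0 1 = A_lam 2 A 0 1"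
     "mp_mult 2 mp_id (A_lam 2 A) 1 0 = A_lam 2 A 1 0" "mp_mult 2 mp_id (A_lam 2 A) 1 1 = A_lam 2 A 1 1"
    using Al1 by auto
  note u = Nform mp_mult2[of "mp_mult 2 mp_id (A_lam 2 A)"] Al1v Alv
  show "N_mat 2 A 0 0 = 0" unfolding u
    using e0cases e1cases pqL unfolding D_def by (elim disjE exE; simp add: max_def algebra_simps zero_ereal_def; linarith?)
  show "N_mat 2 A 1 1 = 0" unfolding u
    using e0cases e1cases pqL unfolding D_def by (elim disjE exE; simp add: max_def algebra_simps zero_ereal_def; linarith?)
  show "N_mat 2 A 0 1 = ereal (p - 2*L) + D" unfolding u
    using e0cases e1cases pqL unfolding D_def by (elim disjE exE; simp add: max_def algebra_simps; linarith?)
  show "N_mat 2 A 1 0 = ereal (q - 2*L) + D" unfolding u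
    using e0cases e1cases pqL unfolding D_def by (elim disjE exE; simp add: max_def algebra_simps; linarith?)
qed

end

context goodmat begin

lemma Dfin: "D \<noteq> \<infinity>" using Dcases by auto

lemma Nfin: "i < 2 \<Longrightarrow> j < 2 \<Longrightarrow> N_mat 2 A i j \<noteq> \<infinity>"
  using Dfin by (auto simp: less_2_cases_iff Nv[simplified])

lemma Mform: "M_mat 2 A i j = max (mp_id i j) (mp_mult 2 mp_id (N_mat 2 A) i j)"
  unfolding M_mat_def lessThan2 by (simp add: sup_max)

lemma N1: "i < 2 \<Longrightarrow> j < 2 \<Longrightarrow> mp_mult 2 mp_id (N_mat 2 A) i j = N_mat 2 A i j"
  using Nfin[of 0 j] Nfin[of 1 j] by (auto simp: mp_mult2 mp_id_def less_2_cases_iff)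

lemma Mv: "M_mat 2 A 0 0 = 0" "M_mat 2 A 1 1 = 0"
  "M_mat 2 A 0 1 = ereal (p - 2*L) + D" "M_mat 2 A 1 0 = ereal (q - 2*L) + D"
  unfolding Mform using N1[of 0 0] N1[of 0 1] N1[of 1 0] N1[of 1 1] Nv
  by (simp_all add: mp_id_def)

lemma Cv: "C_mat 2 A 0 0 = 0" "C_mat 2 A 1 1 = 0"
  "C_mat 2 A 0 1 = ereal (p - 2*L) + D" "C_mat 2 A 1 0 = ereal (q - 2*L) + D"
  unfolding C_mat_def crit_node_iff using Mv by simp_all

lemma Rv: "R_mat 2 A 0 0 = 0" "R_mat 2 A 1 1 = 0"
  "R_mat 2 A 0 1 = ereal (p - 2*L) + D" "R_mat 2 A 1 0 = ereal (q - 2*L) + D"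
  unfolding R_mat_def crit_node_iff using Mv by simp_all

lemma CSR_even:
  "CSR 2 A (2*k) 0 0 = ereal (2*real k*L) \<and> CSR 2 A (2*k) 1 1 = ereal (2*real k*L) \<and>
   CSR 2 A (2*k) 0 1 = ereal (p - 2*L + 2*real k*L) + D \<and> CSR 2 A (2*k) 1 0 = ereal (q - 2*L + 2*real k*L) + D"
proof -
  note h = Spow_even[of k]
  note h00 = h[THEN conjunct1] and h11 = h[THEN conjunct2, THEN conjunct1]
    and h01 = h[THEN conjunct2, THEN conjunct2, THEN conjunct1]
    and h10 = h[THEN conjunct2, THEN conjunct2, THEN conjunct2]
  note u = CSR_def mp_mult2 Cv Rv h00 h11 h01 h10
  show ?thesis unfolding u using Dcases pqL Dfin
    by (elim disjE exE; simp add: max_def algebra_simps; linarith?)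
qed

lemma CSR_odd:
  "CSR 2 A (2*k+1) 0 0 = D + ereal (2*real k*L) \<and> CSR 2 A (2*k+1) 1 1 = D + ereal (2*real k*L) \<and>
   CSR 2 A (2*k+1) 0 1 = ereal (p + 2*real k*L) \<and> CSR 2 A (2*k+1) 1 0 = ereal (q + 2*real k*L)"
proof -
  note h = Spow_odd[of k]
  note h00 = h[THEN conjunct1] and h11 = h[THEN conjunct2, THEN conjunct1]
    and h01 = h[THEN conjunct2, THEN conjunct2, THEN conjunct1]
    and h10 = h[THEN conjunct2, THEN conjunct2, THEN conjunct2]
  note u = CSR_def mp_mult2 Cv Rv h00 h11 h01 h10
  show ?thesis unfolding u using Dcases pqL Dfin
    by (elim disjE exE; simp add: max_def algebra_simps; linarith?)
qed

end

context goodmat begin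

lemma Bv: "k < 2 \<Longrightarrow> B_N 2 A k j = -\<infinity>"
  unfolding B_N_def crit_node_iff by simp

lemma Bpow: "i < 2 \<Longrightarrow> mp_pow 2 (B_N 2 A) (Suc t) i j = -\<infinity>"
proof (induction t arbitrary: j)
  case 0
  then show ?case using Bv[of 0 j] Bv[of 1 j] by (auto simp: mp_mult2 mp_id_def)
next
  case (Suc t)
  have "mp_pow 2 (B_N 2 A) (Suc (Suc t)) i j = max (mp_pow 2 (B_N 2 A) (Suc t) i 0 + B_N 2 A 0 j)
     (mp_pow 2 (B_N 2 A) (Suc t) i 1 + B_N 2 A 1 j)"
    by (simp only: mp_pow.simps(2) mp_mult2)
  also have "\<dots> = -\<infinity>" using Suc.IH[of 0] Suc.IH[of 1] Suc.prems Bv[of 0 j] Bv[of 1 j] by simp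
  finally show ?case .
qed

lemma eq_iff: "t \<ge> 1 \<Longrightarrow> i < 2 \<Longrightarrow>
  (mp_pow 2 A t i j = max (CSR 2 A t i j) (mp_pow 2 (B_N 2 A) t i j)) \<longleftrightarrow> mp_pow 2 A t i j = CSR 2 A t i j"
proof -
  assume "t \<ge> 1" "i < 2"
  then obtain t' where "t = Suc t'" by (cases t) auto
  then show ?thesis using Bpow[OF \<open>i < 2\<close>, of t' j] by simp
qed

lemma P2: "t \<ge> 2 \<Longrightarrow> i < 2 \<Longrightarrow> j < 2 \<Longrightarrow> mp_pow 2 A t i j = CSR 2 A t i j"
proof -
  assume t: "t \<ge> 2" and ij: "i < 2" "j < 2"
  have ij': "(i = 0 \<or> i = 1) \<and> (j = 0 \<or> j = 1)" using ij by auto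
  have "t = 2*((t-2) div 2) + 2 \<or> t = 2*((t-2) div 2) + 3" using t by presburger
  then obtain k where "t = 2*k+2 \<or> t = 2*k+3" by blast
  then show ?thesis
  proof
    assume tk: "t = 2*k+2"
    have n: "2*k+2 = 2*Suc k" by simp
    note a = Apow_even[of k] and c = CSR_even[of "Suc k"]
    have r: "(2*real k+2)*L = 2*real (Suc k)*L" "p + 2*real k*L = p - 2*L + 2*real (Suc k)*L"
      "q + 2*real k*L = q - 2*L + 2*real (Suc k)*L" by (simp_all add: algebra_simps)
    show ?thesis using ij' a c unfolding tk n r by (elim conjE disjE; simp)
  next
    assume tk: "t = 2*k+3"
    have n: "2*k+3 = 2*Suc k + 1" by simp
    note a = Apow_odd[of k] and c = CSR_odd[of "Suc k"]
    have r: "(2*real k+2)*L = 2*real (Suc k)*L" "p + (2*real k+2)*L = p + 2*real (Suc k)*L"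
      "q + (2*real k+2)*L = q + 2*real (Suc k)*L" by (simp_all add: algebra_simps)
    show ?thesis using ij' a c unfolding tk n r by (elim conjE disjE; simp)
  qed
qed

lemma P1: "(\<forall>i<2. \<forall>j<2. mp_pow 2 A 1 i j = CSR 2 A 1 i j) \<longleftrightarrow> A 0 0 = A 1 1"
proof -
  have c: "CSR 2 A 1 0 0 = D" "CSR 2 A 1 1 1 = D" "CSR 2 A 1 0 1 = A 0 1" "CSR 2 A 1 1 0 = A 1 0"
    using CSR_odd[of 0] by (simp_all add: Avals)
  have "(\<forall>i<2. \<forall>j<2. mp_pow 2 A 1 i j = CSR 2 A 1 i j) \<longleftrightarrow> (\<forall>i<2. \<forall>j<2. A i j = CSR 2 A 1 i j)"
    using A1 by auto
  also have "\<dots> \<longleftrightarrow> A 0 0 = D \<and> A 1 1 = D"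
    using c by (auto simp: less_2_cases_iff)
  also have "\<dots> \<longleftrightarrow> A 0 0 = A 1 1" unfolding D_def by (auto simp: max_def)
  finally show ?thesis .
qed

lemma T1_good: "T1 2 A = 2 \<longleftrightarrow> A 0 0 \<noteq> A 1 1"
proof -
  define Q where "Q T \<longleftrightarrow> (\<forall>t\<ge>T. \<forall>i<2. \<forall>j<2.
      mp_pow 2 A t i j = max (CSR 2 A t i j) (mp_pow 2 (B_N 2 A) t i j))" for T
  have T1eq: "T1 2 A = (LEAST T. Q T)" unfolding T1_def Q_def ..
  have Q2: "Q 2" unfolding Q_def
  proof (intro allI impI)
    fix t i j :: nat assume h: "2 \<le> t" "i < 2" "j < 2"
    have t1: "t \<ge> 1" using h by simp
    from h have "mp_pow 2 A t i j = CSR 2 A t i j" by (rule P2)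
    then show "mp_pow 2 A t i j = max (CSR 2 A t i j) (mp_pow 2 (B_N 2 A) t i j)"
      by (rule iffD2[OF eq_iff[OF t1 h(2)]])
  qed
  have Q1: "Q 1 \<longleftrightarrow> A 0 0 = A 1 1"
  proof
    assume "Q 1"
    have "\<forall>i<2. \<forall>j<2. mp_pow 2 A 1 i j = CSR 2 A 1 i j"
    proof (intro allI impI)
      fix i j :: nat assume ij: "i < 2" "j < 2"
      have "mp_pow 2 A 1 i j = max (CSR 2 A 1 i j) (mp_pow 2 (B_N 2 A) 1 i j)"
        using \<open>Q 1\<close> ij unfolding Q_def by (meson order.refl)
      then show "mp_pow 2 A 1 i j = CSR 2 A 1 i j"
        by (rule iffD1[OF eq_iff[OF order.refl ij(1)]])
    qed
    then show "A 0 0 = A 1 1" using P1 by blast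
  next
    assume "A 0 0 = A 1 1"
    then have h: "\<forall>i<2. \<forall>j<2. mp_pow 2 A 1 i j = CSR 2 A 1 i j" using P1 by blast
    show "Q 1" unfolding Q_def
    proof (intro allI impI)
      fix t i j :: nat assume "1 \<le> t" "i < 2" "j < 2"
      have "mp_pow 2 A t i j = CSR 2 A t i j"
      proof (cases "t = 1")
        case True then show ?thesis using h \<open>i < 2\<close> \<open>j < 2\<close> by simp
      next
        case False then show ?thesis using P2 \<open>1 \<le> t\<close> \<open>i < 2\<close> \<open>j < 2\<close> by simp
      qed
      then show "mp_pow 2 A t i j = max (CSR 2 A t i j) (mp_pow 2 (B_N 2 A) t i j)"
        by (rule iffD2[OF eq_iff[OF \<open>1 \<le> t\<close> \<open>i < 2\<close>]])
    qed
  qed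
  have mono: "Q y \<Longrightarrow> y \<le> z \<Longrightarrow> Q z" for y z unfolding Q_def by auto
  show ?thesis
  proof
    assume "T1 2 A = 2"
    show "A 0 0 \<noteq> A 1 1"
    proof
      assume "A 0 0 = A 1 1"
      then have "Q 1" using Q1 by simp
      then have "(LEAST T. Q T) \<le> 1" by (rule Least_le)
      then show False using \<open>T1 2 A = 2\<close> T1eq by simp
    qed
  next
    assume ne: "A 0 0 \<noteq> A 1 1"
    have "(LEAST T. Q T) = 2"
    proof (rule Least_equality)
      show "Q 2" by (rule Q2)
    next
      fix y assume "Q y"
      show "2 \<le> y"
      proof (rule ccontr)
        assume "\<not> 2 \<le> y"
        then have "y \<le> 1" by simp
        then have "Q 1" using mono \<open>Q y\<close> by blast
        then show False using Q1 ne by simp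
      qed
    qed
    then show "T1 2 A = 2" using T1eq by simp
  qed
qed

end

theorem propositionp:
  fixes A :: mpmat
  assumes "\<forall>i<2. \<forall>j<2. A i j \<noteq> \<infinity>"
    and "mcm 2 A \<noteq> -\<infinity>"
    and "g_crit 2 A = 2"
  shows "T1 2 A = DM 2 2 \<longleftrightarrow> A 0 0 \<noteq> A 1 1"
proof -
  interpret twomat A using assms(1) by unfold_locales
  obtain L where L: "mcm 2 A = ereal L" "adm A L"
    "A 0 0 = ereal L \<or> A 1 1 = ereal L \<or>
     (A 0 1 \<noteq> -\<infinity> \<and> A 1 0 \<noteq> -\<infinity> \<and> real_of_ereal (A 0 1) + real_of_ereal (A 1 0) = 2*L)"
    using mcm_struct[OF assms(2)] by blast
  have n0: "A 0 0 \<noteq> ereal L"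
  proof
    assume "A 0 0 = ereal L"
    then have "g_crit 2 A \<le> 1" using bad_case[OF L(1), of 0] by simp
    then show False using assms(3) by simp
  qed
  have n1: "A 1 1 \<noteq> ereal L"
  proof
    assume "A 1 1 = ereal L"
    then have "g_crit 2 A \<le> 1" using bad_case[OF L(1), of 1] by simp
    then show False using assms(3) by simp
  qed
  have c: "A 0 1 \<noteq> -\<infinity>" "A 1 0 \<noteq> -\<infinity>" "real_of_ereal (A 0 1) + real_of_ereal (A 1 0) = 2*L"
    using L(3) n0 n1 by auto
  have "A 0 0 < ereal L" "A 1 1 < ereal L" using L(2) n0 n1 unfolding adm_def by auto
  then interpret goodmat A L using L(1,2) c by unfold_locales auto
  have "DM 2 2 = 2" by (simp add: DM_def)
  then show ?thesis using T1_good by simp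
qed


end
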